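(* Let $t\ge 3$ be an integer, let $G$ be a graph not containing $K_{3,t}$ as a subgraph, let $D$ be a minimum dominating set of $G$, and let $\nabla$ be an integer with $\nabla>\nabla_1^B(G)$. Define $D_1=\{v\in V(G):$ for all $A\subseteq V(G)\setminus\{v\}$ with $N(v)\subseteq N[A]$ we have $|A|>2\nabla-1\}$, $\hat D=\{v\in V(G):$ for all $A\subseteq D\setminus\{v\}$ with $N(v)\subseteq N[A]$ we have $|A|>2\nabla-1\}$, $R_1=V(G)\setminus N[D_1]$ and $N_{R_1}(v)=N(v)\cap R_1$; for $v\in V(G)$ let $B_v=\{z\in V(G)\setminus\{v\}: |N_{R_1}(v)\cap N_{R_1}(z)|\ge(2\nabla-1)t+1\}$, and let $W=\{v\in V(G): B_v\neq\emptyset\}$. Then for every $v\in W$ and every set $A_v\subseteq V(G)\setminus\{v\}$ with $|A_v|\le 2\nabla-1$ and $N_{R_1}(v)\subseteq N[A_v]$ (such a set exists as $v\notin D_1$), we have $B_v\subseteq A_v$ (hence $|B_v|\le 2\nabla-1$); moreover, if $v\notin\hat D$, then $B_v\subseteq D$.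
   Context: Graphs are finite, undirected and simple. $N(v)$ is the open neighbourhood of $v$, $N[v]=N(v)\cup\{v\}$, $N[A]=\bigcup_{a\in A}N[a]$. A dominating set is a set $D$ with $N[D]=V(G)$. A $1$-shallow minor of $G$ is a graph obtained from $G$ by deleting vertices and edges and contracting pairwise vertex-disjoint connected subgraphs of radius at most $1$; $\nabla_1^B(G)$ is the maximum edge density $|E(H)|/|V(H)|$ of a bipartite $1$-shallow minor $H$ of $G$. $K_{3,t}$ is the complete bipartite graph with parts of sizes $3$ and $t$. *)

theory Defs
  imports Complex_Main
begin

definition sgraph :: "'a set \<Rightarrow> 'a set set \<Rightarrow> bool" where
  "sgraph V E \<longleftrightarrow> finite V \<and> (\<forall>e\<in>E. \<exists>u v. e = {u, v} \<and> u \<noteq> v \<and> u \<in> V \<and> v \<in> V)"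

definition nbh :: "'a set \<Rightarrow> 'a set set \<Rightarrow> 'a \<Rightarrow> 'a set" where
  "nbh V E v = {u\<in>V. {u, v} \<in> E}"

definition cnbh :: "'a set \<Rightarrow> 'a set set \<Rightarrow> 'a \<Rightarrow> 'a set" where
  "cnbh V E v = insert v (nbh V E v)"

definition cnbh_set :: "'a set \<Rightarrow> 'a set set \<Rightarrow> 'a set \<Rightarrow> 'a set" where
  "cnbh_set V E A = (\<Union>a\<in>A. cnbh V E a)"

definition dominating :: "'a set \<Rightarrow> 'a set set \<Rightarrow> 'a set \<Rightarrow> bool" where
  "dominating V E D \<longleftrightarrow> D \<subseteq> V \<and> cnbh_set V E D = V"

definition min_dominating :: "'a set \<Rightarrow> 'a set set \<Rightarrow> 'a set \<Rightarrow> bool" where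
  "min_dominating V E D \<longleftrightarrow> dominating V E D \<and>
     (\<forall>D'. dominating V E D' \<longrightarrow> card D \<le> card D')"

definition has_K3t :: "'a set \<Rightarrow> 'a set set \<Rightarrow> nat \<Rightarrow> bool" where
  "has_K3t V E t \<longleftrightarrow> (\<exists>X Y. X \<subseteq> V \<and> Y \<subseteq> V \<and> X \<inter> Y = {} \<and> card X = 3 \<and> card Y = t \<and>
       (\<forall>x\<in>X. \<forall>y\<in>Y. {x, y} \<in> E))"

text \<open>1-shallow minors, realised on branch sets: VH is a family of pairwise disjoint nonempty
  branch sets, each of which induces a connected subgraph of radius at most 1 (i.e. has a
  centre adjacent to all its other vertices); every edge of H joins two distinct branch sets
  between which G has an edge.  Every 1-shallow minor is isomorphic to such a graph.\<close>
definition shallow_minor1 :: "'a set \<Rightarrow> 'a set set \<Rightarrow> 'a set set \<Rightarrow> 'a set set set \<Rightarrow> bool" where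
  "shallow_minor1 V E VH EH \<longleftrightarrow>
     (\<forall>B\<in>VH. B \<noteq> {} \<and> B \<subseteq> V \<and> (\<exists>c\<in>B. B \<subseteq> cnbh V E c)) \<and>
     (\<forall>B1\<in>VH. \<forall>B2\<in>VH. B1 \<noteq> B2 \<longrightarrow> B1 \<inter> B2 = {}) \<and>
     (\<forall>e\<in>EH. \<exists>B1 B2. e = {B1, B2} \<and> B1 \<noteq> B2 \<and> B1 \<in> VH \<and> B2 \<in> VH \<and>
         (\<exists>x\<in>B1. \<exists>y\<in>B2. {x, y} \<in> E))"

definition bipartite :: "'b set \<Rightarrow> 'b set set \<Rightarrow> bool" where
  "bipartite VH EH \<longleftrightarrow> (\<exists>P. P \<subseteq> VH \<and> (\<forall>e\<in>EH. card (e \<inter> P) = 1))"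

definition nabla1B :: "'a set \<Rightarrow> 'a set set \<Rightarrow> real" where
  "nabla1B V E = Max {real (card EH) / real (card VH) | VH EH.
      shallow_minor1 V E VH EH \<and> bipartite VH EH \<and> VH \<noteq> {}}"

definition D1set :: "'a set \<Rightarrow> 'a set set \<Rightarrow> int \<Rightarrow> 'a set" where
  "D1set V E nabla = {v\<in>V. \<forall>A. A \<subseteq> V - {v} \<and> nbh V E v \<subseteq> cnbh_set V E A
                          \<longrightarrow> int (card A) > 2 * nabla - 1}"

definition Dhat :: "'a set \<Rightarrow> 'a set set \<Rightarrow> 'a set \<Rightarrow> int \<Rightarrow> 'a set" where
  "Dhat V E D nabla = {v\<in>V. \<forall>A. A \<subseteq> D - {v} \<and> nbh V E v \<subseteq> cnbh_set V E A
                          \<longrightarrow> int (card A) > 2 * nabla - 1}"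

definition R1set :: "'a set \<Rightarrow> 'a set set \<Rightarrow> int \<Rightarrow> 'a set" where
  "R1set V E nabla = V - cnbh_set V E (D1set V E nabla)"

definition NR1 :: "'a set \<Rightarrow> 'a set set \<Rightarrow> int \<Rightarrow> 'a \<Rightarrow> 'a set" where
  "NR1 V E nabla v = nbh V E v \<inter> R1set V E nabla"

definition Bset :: "'a set \<Rightarrow> 'a set set \<Rightarrow> int \<Rightarrow> nat \<Rightarrow> 'a \<Rightarrow> 'a set" where
  "Bset V E nabla t v = {z\<in>V - {v}.
      int (card (NR1 V E nabla v \<inter> NR1 V E nabla z)) \<ge> (2 * nabla - 1) * int t + 1}"

definition Wset :: "'a set \<Rightarrow> 'a set set \<Rightarrow> int \<Rightarrow> nat \<Rightarrow> 'a set" where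
  "Wset V E nabla t = {v\<in>V. Bset V E nabla t v \<noteq> {}}"

end

theory Submission
  imports Defs
begin

lemma nabla_nonneg:
  assumes "sgraph V E" and "v \<in> V"
  shows "nabla1B V E \<ge> 0"
proof -
  let ?S = "{real (card EH) / real (card VH) | VH EH.
      shallow_minor1 V E VH EH \<and> bipartite VH EH \<and> VH \<noteq> {}}"
  have fV: "finite V" using assms(1) by (simp add: sgraph_def)
  have "?S \<subseteq> (\<lambda>(VH,EH). real (card EH) / real (card VH)) ` (Pow (Pow V) \<times> Pow (Pow (Pow V)))"
  proof
    fix x assume "x \<in> ?S"
    then obtain VH EH where x: "x = real (card EH) / real (card VH)" and sm: "shallow_minor1 V E VH EH"
      by blast
    have 1: "VH \<subseteq> Pow V" using sm by (auto simp: shallow_minor1_def)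
    have "EH \<subseteq> Pow (Pow V)"
    proof
      fix e assume "e \<in> EH"
      have "\<forall>e\<in>EH. \<exists>B1 B2. e = {B1, B2} \<and> B1 \<noteq> B2 \<and> B1 \<in> VH \<and> B2 \<in> VH \<and>
         (\<exists>x\<in>B1. \<exists>y\<in>B2. {x, y} \<in> E)" using sm unfolding shallow_minor1_def by (elim conjE)
      then obtain B1 B2 where "e = {B1, B2}" "B1 \<in> VH" "B2 \<in> VH" using \<open>e \<in> EH\<close>
        by meson
      then show "e \<in> Pow (Pow V)" using 1 by auto
    qed
    then show "x \<in> (\<lambda>(VH,EH). real (card EH) / real (card VH)) ` (Pow (Pow V) \<times> Pow (Pow (Pow V)))"
      using 1 x \<open>EH \<subseteq> Pow (Pow V)\<close> by (intro image_eqI[where x="(VH,EH)"]) auto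
  qed
  moreover have "finite (Pow (Pow V) \<times> Pow (Pow (Pow V)))" using fV by simp
  ultimately have fin: "finite ?S" by (meson finite_imageI finite_subset)
  have "shallow_minor1 V E {{v}} {}" using assms(2)
    by (auto simp: shallow_minor1_def cnbh_def)
  moreover have "bipartite {{v}} ({} :: 'a set set set)" by (auto simp: bipartite_def)
  ultimately have "real (card ({} :: 'a set set set)) / real (card {{v}}) \<in> ?S"
    by blast
  hence "(0::real) \<in> ?S" by simp
  then show ?thesis unfolding nabla1B_def using fin by (meson Max_ge)
qed

lemma key:
  assumes sg: "sgraph V E" and noK: "\<not> has_K3t V E t"
    and k: "k \<ge> 1" and v: "v \<in> V"
    and zB: "z \<in> Bset V E nabla t v" and kdef: "k = 2 * nabla - 1"
    and Av: "Av \<subseteq> V - {v}" "int (card Av) \<le> k" "NR1 V E nabla v \<subseteq> cnbh_set V E Av"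
  shows "z \<in> Av"
proof (rule ccontr)
  assume zA: "z \<notin> Av"
  have fV: "finite V" using sg by (simp add: sgraph_def)
  have noloop: "\<And>x. {x, x} \<notin> E" using sg unfolding sgraph_def
    by (metis doubleton_eq_iff insert_absorb2)
  define S where "S = NR1 V E nabla v \<inter> NR1 V E nabla z"
  have zV: "z \<in> V" "z \<noteq> v" using zB by (auto simp: Bset_def)
  have cS: "int (card S) \<ge> k * int t + 1" using zB kdef by (simp add: Bset_def S_def)
  have SV: "S \<subseteq> V" by (auto simp: S_def NR1_def nbh_def)
  have fS: "finite S" using SV fV finite_subset by blast
  have fA: "finite Av" using Av(1) fV finite_subset by blast
  have "\<exists>a\<in>Av. card (S \<inter> cnbh V E a) \<ge> t + 1"
  proof (rule ccontr)
    assume "\<not> ?thesis"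
    hence le: "\<And>a. a \<in> Av \<Longrightarrow> card (S \<inter> cnbh V E a) \<le> t" by force
    have "S = (\<Union>a\<in>Av. S \<inter> cnbh V E a)" using Av(3) by (auto simp: S_def cnbh_set_def)
    hence "card S \<le> (\<Sum>a\<in>Av. card (S \<inter> cnbh V E a))"
      by (metis (no_types, lifting) card_UN_le fA comp_apply sum.cong)
    also have "\<dots> \<le> card Av * t" using le sum_bounded_above[of Av "\<lambda>a. card (S \<inter> cnbh V E a)" t]
      by simp
    finally have "int (card S) \<le> int (card Av) * int t" by (metis of_nat_le_iff of_nat_mult)
    also have "\<dots> \<le> k * int t" using Av(2) by (simp add: mult_right_mono)
    finally show False using cS by simp
  qed
  then obtain a where aA: "a \<in> Av" and ca: "card (S \<inter> cnbh V E a) \<ge> t + 1" by blast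
  have "S \<inter> cnbh V E a \<subseteq> insert a (S \<inter> nbh V E a)" by (auto simp: cnbh_def)
  hence "card (S \<inter> cnbh V E a) \<le> card (insert a (S \<inter> nbh V E a))"
    using fS by (meson card_mono finite.insertI finite_Int)
  also have "\<dots> \<le> Suc (card (S \<inter> nbh V E a))" by (simp add: card_insert_le_m1)
  finally have "card (S \<inter> nbh V E a) \<ge> t" using ca by simp
  then obtain Y where Y: "Y \<subseteq> S \<inter> nbh V E a" "card Y = t"
    by (meson obtain_subset_with_card_n)
  have av: "a \<noteq> v" "a \<in> V" using aA Av(1) by auto
  have az: "a \<noteq> z" using aA zA by auto
  have "has_K3t V E t"
    unfolding has_K3t_def
  proof (intro exI conjI)
    show "{v, z, a} \<subseteq> V" using v zV av by auto
    show "Y \<subseteq> V" using Y SV by auto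
    show "{v, z, a} \<inter> Y = {}" using Y noloop
      by (auto simp: S_def NR1_def nbh_def)
    show "card {v, z, a} = 3" using zV av az by auto
    show "card Y = t" by fact
    show "\<forall>x\<in>{v, z, a}. \<forall>y\<in>Y. {x, y} \<in> E" using Y
      by (auto simp: S_def NR1_def nbh_def insert_commute)
  qed
  then show False using noK by simp
qed

theorem lemma30:
  fixes V :: "'a set" and E :: "'a set set" and t :: nat and D :: "'a set" and nabla :: int
  assumes "sgraph V E"
    and "t \<ge> 3"
    and "\<not> has_K3t V E t"
    and "min_dominating V E D"
    and "real_of_int nabla > nabla1B V E"
  shows "\<forall>v\<in>Wset V E nabla t.
           (\<forall>Av. Av \<subseteq> V - {v} \<and> int (card Av) \<le> 2 * nabla - 1
                 \<and> NR1 V E nabla v \<subseteq> cnbh_set V E Av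
                 \<longrightarrow> Bset V E nabla t v \<subseteq> Av)
         \<and> int (card (Bset V E nabla t v)) \<le> 2 * nabla - 1
         \<and> (v \<notin> Dhat V E D nabla \<longrightarrow> Bset V E nabla t v \<subseteq> D)"
proof
  fix v assume vW: "v \<in> Wset V E nabla t"
  have v: "v \<in> V" and Bne: "Bset V E nabla t v \<noteq> {}" using vW by (auto simp: Wset_def)
  have fV: "finite V" using assms(1) by (simp add: sgraph_def)
  have "nabla1B V E \<ge> 0" using nabla_nonneg[OF assms(1) v] .
  hence n1: "nabla \<ge> 1" using assms(5) by linarith
  define k where "k = 2 * nabla - 1"
  have k: "k \<ge> 1" using n1 k_def by simp
  have P1: "\<forall>Av. Av \<subseteq> V - {v} \<and> int (card Av) \<le> 2 * nabla - 1
                 \<and> NR1 V E nabla v \<subseteq> cnbh_set V E Av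
                 \<longrightarrow> Bset V E nabla t v \<subseteq> Av"
  proof (intro allI impI subsetI)
    fix Av z assume H: "Av \<subseteq> V - {v} \<and> int (card Av) \<le> 2 * nabla - 1
                 \<and> NR1 V E nabla v \<subseteq> cnbh_set V E Av" and zB: "z \<in> Bset V E nabla t v"
    have "int (card Av) \<le> k" using H k_def by simp
    then show "z \<in> Av" using key[OF assms(1) assms(3) k v zB k_def] H by blast
  qed
  obtain z where zB: "z \<in> Bset V E nabla t v" using Bne by blast
  have "int (card (NR1 V E nabla v \<inter> NR1 V E nabla z)) \<ge> k * int t + 1"
    using zB k_def by (simp add: Bset_def)
  moreover have "k * int t \<ge> 0" using k by simp
  ultimately have "NR1 V E nabla v \<inter> NR1 V E nabla z \<noteq> {}" by (metis card.empty linorder_not_le of_nat_0 zless_add1_eq order_le_less_trans less_irrefl)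
  then obtain u where u: "u \<in> nbh V E v" "u \<in> R1set V E nabla" by (auto simp: NR1_def)
  have "v \<notin> D1set V E nabla"
  proof
    assume "v \<in> D1set V E nabla"
    moreover have "{v, u} \<in> E" using u(1) by (simp add: nbh_def insert_commute)
    ultimately have "u \<in> cnbh_set V E (D1set V E nabla)" using u(1)
      unfolding cnbh_set_def cnbh_def nbh_def by blast
    thus False using u(2) by (simp add: R1set_def)
  qed
  then obtain A where A: "A \<subseteq> V - {v}" "nbh V E v \<subseteq> cnbh_set V E A" "\<not> int (card A) > 2 * nabla - 1"
    using v by (auto simp: D1set_def)
  have c: "int (card A) \<le> 2*nabla-1" using A(3) by linarith
  have nr: "NR1 V E nabla v \<subseteq> cnbh_set V E A" using A(2) by (auto simp: NR1_def)
  have "Bset V E nabla t v \<subseteq> A" by (rule P1[rule_format, of A]) (intro conjI A(1) c nr)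
  hence "card (Bset V E nabla t v) \<le> card A"
    using A(1) fV by (meson card_mono finite_Diff finite_subset)
  hence P2: "int (card (Bset V E nabla t v)) \<le> 2 * nabla - 1" using A(3) by linarith
  have P3: "v \<notin> Dhat V E D nabla \<longrightarrow> Bset V E nabla t v \<subseteq> D"
  proof
    assume "v \<notin> Dhat V E D nabla"
    then obtain A where A: "A \<subseteq> D - {v}" "nbh V E v \<subseteq> cnbh_set V E A" "\<not> int (card A) > 2 * nabla - 1"
      using v by (auto simp: Dhat_def)
    have "D \<subseteq> V" using assms(4) by (simp add: min_dominating_def dominating_def)
    hence A1: "A \<subseteq> V - {v}" using A(1) by auto
    have c: "int (card A) \<le> 2*nabla-1" using A(3) by linarith
    have nr: "NR1 V E nabla v \<subseteq> cnbh_set V E A" using A(2) by (auto simp: NR1_def)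
    have "Bset V E nabla t v \<subseteq> A" by (rule P1[rule_format, of A]) (intro conjI A1 c nr)
    thus "Bset V E nabla t v \<subseteq> D" using A(1) by auto
  qed
  show "(\<forall>Av. Av \<subseteq> V - {v} \<and> int (card Av) \<le> 2 * nabla - 1
                 \<and> NR1 V E nabla v \<subseteq> cnbh_set V E Av
                 \<longrightarrow> Bset V E nabla t v \<subseteq> Av)
         \<and> int (card (Bset V E nabla t v)) \<le> 2 * nabla - 1
         \<and> (v \<notin> Dhat V E D nabla \<longrightarrow> Bset V E nabla t v \<subseteq> D)"
    using P1 P2 P3 by blast
qed

end
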